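(* Let $(\rho_n)$ be LLN-appropriate with constants $(c_i)_{i\ge1}$, and let $\sigma\in S_\infty$ be a permutation whose cycles of length $\ge2$ have lengths given by the partition $\lambda$. Then $$\lim_{n\to\infty}n^{|\sigma|/2}M_{\rho_n}(\sigma)=\prod_{i\in\lambda}c_i,$$ the product over the parts of $\lambda$ with multiplicity.
   Context: $\rho_n$ is a probability measure on the set $\mathbb{Y}_n$ of partitions of $n$; $M_\rho(\sigma)=\sum_{\lambda\in\mathbb{Y}_n}\rho(\lambda)\chi_\lambda(\tau)/\dim\lambda$ if $\sigma\in S_\infty$ is conjugate to some $\tau\in S_n$, else $0$; $|\sigma|$ is the minimal number of transpositions with product $\sigma$. Young generating function $A_\rho=\sum_{\vec i}M_\rho(\sigma_{\vec i})\prod_{k\ge1}n^{i_k(k-1)/2}x_k^{i_k}/i_k!$ over finitely supported $\vec i\in\mathbb{Z}_{\ge0}^{\mathbb{N}}$, $\sigma_{\vec i}$ any permutation with $i_k$ cycles of length $k$ for each $k\ge2$. LLN-appropriate with constants $c_i$: $\lim_n\partial_i\ln A_{\rho_n}|_{\vec x=0}=c_i$ for all $i$, and all formal mixed derivatives of order $\ge2$ of $\ln A_{\rho_n}$ at $\vec x=0$ tend to $0$. *)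

theory Defs
  imports "HOL-Probability.Probability" "HOL-Library.Poly_Mapping"
    "HOL-Combinatorics.Transposition" "HOL-Combinatorics.Permutations"
begin

definition partitions :: "nat \<Rightarrow> nat list set" where
  "partitions n = {l. sorted_wrt (\<ge>) l \<and> (\<forall>x\<in>set l. 0 < x) \<and> sum_list l = n}"

definition diagram :: "nat list \<Rightarrow> (nat \<times> nat) set" where
  "diagram l = {(i, j). i < length l \<and> j < l ! i}"

definition cell_adj :: "nat \<times> nat \<Rightarrow> nat \<times> nat \<Rightarrow> bool" where
  "cell_adj a b \<longleftrightarrow>
     (fst a = fst b \<and> (snd a = Suc (snd b) \<or> snd b = Suc (snd a))) \<or>
     (snd a = snd b \<and> (fst a = Suc (fst b) \<or> fst b = Suc (fst a)))"

definition edge_connected :: "(nat \<times> nat) set \<Rightarrow> bool" where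
  "edge_connected S \<longleftrightarrow>
     (\<forall>a\<in>S. \<forall>b\<in>S. (a, b) \<in> {(c, d). c \<in> S \<and> d \<in> S \<and> cell_adj c d}\<^sup>*)"

definition border_strip :: "nat list \<Rightarrow> nat list \<Rightarrow> bool" where
  "border_strip lam nu \<longleftrightarrow>
     diagram nu \<subseteq> diagram lam \<and>
     (let S = diagram lam - diagram nu in
        S \<noteq> {} \<and> edge_connected S \<and>
        \<not> (\<exists>i j. {(i, j), (Suc i, j), (i, Suc j), (Suc i, Suc j)} \<subseteq> S))"

definition strip_height :: "nat list \<Rightarrow> nat list \<Rightarrow> nat" where
  "strip_height lam nu = card (fst ` (diagram lam - diagram nu)) - 1"

text \<open>Irreducible character chi_lam evaluated on cycle type mu (Murnaghan-Nakayama rule).\<close>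
primrec mn_char :: "nat list \<Rightarrow> nat list \<Rightarrow> int" where
  "mn_char lam [] = (if lam = [] then 1 else 0)"
| "mn_char lam (k # mu) =
     (\<Sum>nu\<in>{nu. k \<le> sum_list lam \<and> nu \<in> partitions (sum_list lam - k) \<and> border_strip lam nu}.
        (-1) ^ strip_height lam nu * mn_char nu mu)"

definition dimY :: "nat list \<Rightarrow> int" where
  "dimY lam = mn_char lam (replicate (sum_list lam) 1)"

definition finitary :: "(nat \<Rightarrow> nat) \<Rightarrow> bool" where
  "finitary \<sigma> \<longleftrightarrow> bij \<sigma> \<and> finite {x. \<sigma> x \<noteq> x}"

definition porbit :: "(nat \<Rightarrow> nat) \<Rightarrow> nat \<Rightarrow> nat set" where
  "porbit \<sigma> x = range (\<lambda>k. (\<sigma> ^^ k) x)"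

definition cycle_lengths :: "(nat \<Rightarrow> nat) \<Rightarrow> nat multiset" where
  "cycle_lengths \<sigma> = image_mset card (mset_set (porbit \<sigma> ` {x. \<sigma> x \<noteq> x}))"

definition full_ctype :: "nat \<Rightarrow> (nat \<Rightarrow> nat) \<Rightarrow> nat list" where
  "full_ctype n \<tau> = rev (sorted_list_of_multiset
      (image_mset card (mset_set (porbit \<tau> ` {0..<n}))))"

definition transp_length :: "(nat \<Rightarrow> nat) \<Rightarrow> nat" where
  "transp_length \<sigma> = (LEAST k. \<exists>ts. length ts = k \<and> (\<forall>(a, b)\<in>set ts. a \<noteq> b) \<and>
      \<sigma> = foldr (\<lambda>(a, b) f. Transposition.transpose a b \<circ> f) ts id)"

definition conj_to_Sn :: "nat \<Rightarrow> (nat \<Rightarrow> nat) \<Rightarrow> (nat \<Rightarrow> nat) \<Rightarrow> bool" where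
  "conj_to_Sn n \<sigma> \<tau> \<longleftrightarrow> \<tau> permutes {0..<n} \<and> (\<exists>g. finitary g \<and> \<sigma> = g \<circ> \<tau> \<circ> inv g)"

definition M :: "nat list pmf \<Rightarrow> nat \<Rightarrow> (nat \<Rightarrow> nat) \<Rightarrow> real" where
  "M \<rho> n \<sigma> = (if \<exists>\<tau>. conj_to_Sn n \<sigma> \<tau> then
      (let \<tau> = (SOME \<tau>. conj_to_Sn n \<sigma> \<tau>) in
        (\<Sum>lam\<in>partitions n. pmf \<rho> lam * real_of_int (mn_char lam (full_ctype n \<tau>))
                               / real_of_int (dimY lam)))
     else 0)"

text \<open>Coefficients indexed by finitely supported exponent vectors; index 0 is unused.\<close>
type_synonym mfps = "(nat \<Rightarrow>\<^sub>0 nat) \<Rightarrow> real"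

definition mmult :: "mfps \<Rightarrow> mfps \<Rightarrow> mfps" where
  "mmult F G = (\<lambda>\<alpha>. \<Sum>(\<beta>, \<gamma>)\<in>{(\<beta>, \<gamma>). \<beta> + \<gamma> = \<alpha>}. F \<beta> * G \<gamma>)"

primrec mpow :: "mfps \<Rightarrow> nat \<Rightarrow> mfps" where
  "mpow F 0 = (\<lambda>\<alpha>. if \<alpha> = 0 then 1 else 0)"
| "mpow F (Suc m) = mmult F (mpow F m)"

text \<open>Formal logarithm: ln F = ln F(0) + log(1 + G), G = F/F(0) - 1.\<close>
definition mlog :: "mfps \<Rightarrow> mfps" where
  "mlog F = (\<lambda>\<alpha>. if \<alpha> = 0 then ln (F 0) else
      (let G = (\<lambda>\<beta>. if \<beta> = 0 then 0 else F \<beta> / F 0) in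
        suminf (\<lambda>m. (-1) ^ m / real (m + 1) * mpow G (m + 1) \<alpha>)))"

definition mderiv :: "nat \<Rightarrow> mfps \<Rightarrow> mfps" where
  "mderiv k F = (\<lambda>\<alpha>. real (Poly_Mapping.lookup \<alpha> k + 1) * F (\<alpha> + Poly_Mapping.single k 1))"

definition mderivs :: "nat list \<Rightarrow> mfps \<Rightarrow> mfps" where
  "mderivs ks F = fold mderiv ks F"

definition perm_of_type :: "(nat \<Rightarrow>\<^sub>0 nat) \<Rightarrow> (nat \<Rightarrow> nat)" where
  "perm_of_type \<alpha> = (SOME \<sigma>. finitary \<sigma> \<and> (\<forall>k\<ge>2. count (cycle_lengths \<sigma>) k = Poly_Mapping.lookup \<alpha> k))"

definition young_gf :: "nat list pmf \<Rightarrow> nat \<Rightarrow> mfps" where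
  "young_gf \<rho> n = (\<lambda>\<alpha>. if Poly_Mapping.lookup \<alpha> 0 \<noteq> 0 then 0 else
      M \<rho> n (perm_of_type \<alpha>) *
      (\<Prod>k\<in>Poly_Mapping.keys \<alpha>. sqrt (real n) ^ (Poly_Mapping.lookup \<alpha> k * (k - 1)) / fact (Poly_Mapping.lookup \<alpha> k)))"

definition LLN_appropriate :: "(nat \<Rightarrow> nat list pmf) \<Rightarrow> (nat \<Rightarrow> real) \<Rightarrow> bool" where
  "LLN_appropriate \<rho> c \<longleftrightarrow>
     (\<forall>i\<ge>1. (\<lambda>n. mderivs [i] (mlog (young_gf (\<rho> n) n)) 0) \<longlonglongrightarrow> c i) \<and>
     (\<forall>ks. 2 \<le> length ks \<and> (\<forall>k\<in>set ks. 1 \<le> k) \<longrightarrow>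
        (\<lambda>n. mderivs ks (mlog (young_gf (\<rho> n) n)) 0) \<longlonglongrightarrow> 0)"

end

theory Submission
  imports Defs "HOL-Combinatorics.Orbits"
begin

section \<open>Orbits\<close>

lemma finitary_iff_permutation: "finitary f \<longleftrightarrow> permutation f"
  by (simp add: finitary_def permutation)

lemma porbit_eq_orbit: "permutation f \<Longrightarrow> porbit f x = orbit f x"
  by (auto simp: porbit_def orbit_altdef_permutation)

lemma self_in_porbit[simp]: "x \<in> porbit f x"
  unfolding porbit_def by (metis funpow_0 rangeI)

lemma porbit_step: "z \<in> porbit f x \<Longrightarrow> f z \<in> porbit f x"
proof -
  assume "z \<in> porbit f x"
  then obtain k where "z = (f ^^ k) x" by (auto simp: porbit_def)
  then have "f z = (f ^^ Suc k) x" by simp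
  then show ?thesis unfolding porbit_def by (metis rangeI)
qed

lemma porbit_same:
  assumes "permutation f" "y \<in> porbit f x"
  shows "porbit f y = porbit f x"
proof -
  have xx: "x \<in> orbit f x" using assms(1) by (rule permutation_self_in_orbit)
  have y: "y \<in> orbit f x" using assms by (simp add: porbit_eq_orbit)
  have "x \<in> orbit f y" using orbit_swap[OF xx y] .
  then have "orbit f y = orbit f x" using y by (auto intro: orbit_trans)
  then show ?thesis using assms(1) by (simp add: porbit_eq_orbit)
qed

lemma finite_porbit: "permutation f \<Longrightarrow> finite (porbit f x)"
  by (simp add: porbit_eq_orbit finite_orbit permutation_self_in_orbit)

lemma porbit_singleton_iff: "permutation f \<Longrightarrow> porbit f x = {x} \<longleftrightarrow> f x = x"
  by (simp add: porbit_eq_orbit orbit_eq_singleton_iff)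

lemma porbit_fixed: "f x = x \<Longrightarrow> porbit f x = {x}"
proof -
  assume a: "f x = x"
  have "(f ^^ k) x = x" for k by (induct k) (simp_all add: a)
  then show ?thesis by (auto simp: porbit_def)
qed

lemma porbit_agree:
  assumes "\<forall>z\<in>porbit g y. f z = g z"
  shows "porbit f y = porbit g y"
proof -
  have "(f ^^ k) y = (g ^^ k) y" for k
  proof (induct k)
    case (Suc k)
    have "(g ^^ k) y \<in> porbit g y" by (simp add: porbit_def)
    then show ?case using Suc assms by simp
  qed simp
  then show ?thesis by (simp add: porbit_def)
qed

lemma porbit_subset:
  assumes "inj f" "{z. f z \<noteq> z} \<subseteq> U" "x \<in> U"
  shows "porbit f x \<subseteq> U"
proof -
  have "(f ^^ k) x \<in> U" for k
  proof (induct k)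
    case (Suc k)
    let ?z = "(f ^^ k) x"
    show ?case
    proof (cases "f ?z = ?z")
      case True then show ?thesis using Suc by simp
    next
      case False
      then have "f (f ?z) \<noteq> f ?z" using assms(1) by (metis injD)
      then show ?thesis using assms(2) by auto
    qed
  qed (simp add: assms)
  then show ?thesis by (auto simp: porbit_def)
qed

lemma Union_porbits:
  assumes "permutation f" "{z. f z \<noteq> z} \<subseteq> U"
  shows "\<Union> (porbit f ` U) = U"
proof
  have "inj f" using permutation_bijective[OF assms(1)] by (simp add: bij_def)
  then show "\<Union> (porbit f ` U) \<subseteq> U" using porbit_subset[OF _ assms(2)] by blast
  show "U \<subseteq> \<Union> (porbit f ` U)" using self_in_porbit by blast
qed

lemma card_porbits_sum:
  assumes "permutation f" "{z. f z \<noteq> z} \<subseteq> U" "finite U"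
  shows "(\<Sum>B\<in>porbit f ` U. card B) = card U"
proof -
  have "pairwise disjnt (porbit f ` U)"
    unfolding pairwise_def disjnt_def
  proof (intro ballI impI)
    fix A B assume "A \<in> porbit f ` U" "B \<in> porbit f ` U" "A \<noteq> B"
    then obtain a b where ab: "A = porbit f a" "B = porbit f b" by blast
    show "A \<inter> B = {}"
    proof (rule ccontr)
      assume "A \<inter> B \<noteq> {}"
      then obtain z where "z \<in> porbit f a" "z \<in> porbit f b" using ab by blast
      then have "porbit f a = porbit f b" using porbit_same[OF assms(1)] by metis
      then show False using ab \<open>A \<noteq> B\<close> by simp
    qed
  qed
  then have "card (\<Union> (porbit f ` U)) = (\<Sum>B\<in>porbit f ` U. card B)"
    by (rule card_Union_disjoint) (auto simp: finite_porbit assms(1))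
  then show ?thesis using Union_porbits[OF assms(1,2)] by simp
qed

definition dd :: "(nat \<Rightarrow> nat) \<Rightarrow> nat" where
  "dd f = (\<Sum>B\<in>porbit f ` {z. f z \<noteq> z}. card B - 1)"

lemma dd_eq:
  assumes "permutation f" "{z. f z \<noteq> z} \<subseteq> U" "finite U"
  shows "dd f = card U - card (porbit f ` U)"
proof -
  have "dd f = (\<Sum>B\<in>porbit f ` U. card B - 1)"
    unfolding dd_def
  proof (rule sum.mono_neutral_left)
    show "finite (porbit f ` U)" using assms(3) by simp
    show "porbit f ` {z. f z \<noteq> z} \<subseteq> porbit f ` U" using assms(2) by auto
    show "\<forall>i\<in>porbit f ` U - porbit f ` {z. f z \<noteq> z}. card i - 1 = 0"
    proof
      fix B assume "B \<in> porbit f ` U - porbit f ` {z. f z \<noteq> z}"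
      then obtain u where "B = porbit f u" "f u = u" by blast
      then have "B = {u}" using porbit_fixed by simp
      then show "card B - 1 = 0" by simp
    qed
  qed
  moreover have "(\<Sum>B\<in>porbit f ` U. card B - 1) + card (porbit f ` U) = (\<Sum>B\<in>porbit f ` U. card B)"
  proof -
    have "(\<Sum>B\<in>porbit f ` U. card B - 1) + card (porbit f ` U) = (\<Sum>B\<in>porbit f ` U. card B - 1 + 1)"
      by (simp only: sum.distrib card_eq_sum)
    also have "\<dots> = (\<Sum>B\<in>porbit f ` U. card B)"
    proof (rule sum.cong)
      fix B assume "B \<in> porbit f ` U"
      then obtain u where "B = porbit f u" by blast
      then have "finite B" "u \<in> B" using finite_porbit[OF assms(1)] by auto
      then have "card B \<ge> 1" by (metis One_nat_def Suc_leI card_gt_0_iff empty_iff)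
      then show "card B - 1 + 1 = card B" by simp
    qed simp
    finally show ?thesis .
  qed
  ultimately show ?thesis using card_porbits_sum[OF assms] by simp
qed

lemma dd_cycle_lengths: "dd f = (\<Sum>i\<in>#cycle_lengths f. i - 1)"
  unfolding dd_def cycle_lengths_def sum_unfold_sum_mset[of "\<lambda>B. card B - 1"]
  by (simp add: image_mset.compositionality o_def)


lemma foldr_transp: "foldr (\<lambda>(a, b) f. Transposition.transpose a b \<circ> f) ts id = apply_transps ts"
  by (induct ts) (auto simp: case_prod_unfold)

lemma orbits_lower_step:
  assumes g: "permutation g" and sg: "{z. g z \<noteq> z} \<subseteq> U" and U: "finite U" and ab: "a \<in> U" "b \<in> U"
  shows "card (porbit g ` U) \<le> card (porbit (Transposition.transpose a b \<circ> g) ` U) + 1"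
proof -
  let ?f = "Transposition.transpose a b \<circ> g"
  let ?A = "porbit g ` U"
  define Good where "Good = {B\<in>?A. a\<notin>B \<and> b\<notin>B}"
  have sub: "Good \<subseteq> porbit ?f ` U - {porbit ?f a}"
  proof
    fix B assume B: "B \<in> Good"
    then obtain y where y: "y \<in> U" "B = porbit g y" "a \<notin> B" "b \<notin> B" unfolding Good_def by blast
    have "\<forall>z\<in>porbit g y. ?f z = g z"
    proof
      fix z assume "z \<in> porbit g y"
      then have "g z \<in> B" using y porbit_step by metis
      then have "g z \<noteq> a" "g z \<noteq> b" using y by auto
      then show "?f z = g z" by (simp add: transpose_apply_other)
    qed
    then have "porbit ?f y = B" using porbit_agree y by metis
    moreover have "a \<in> porbit ?f a" by simp
    ultimately show "B \<in> porbit ?f ` U - {porbit ?f a}" using y by auto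
  qed
  have sub2: "?A \<subseteq> Good \<union> {porbit g a, porbit g b}"
  proof
    fix B assume "B \<in> ?A"
    then obtain y where y: "y \<in> U" "B = porbit g y" by blast
    show "B \<in> Good \<union> {porbit g a, porbit g b}"
    proof (cases "a \<in> B \<or> b \<in> B")
      case True
      then show ?thesis using porbit_same[OF g] y by auto
    next
      case False
      then show ?thesis using \<open>B \<in> ?A\<close> unfolding Good_def by auto
    qed
  qed
  have fin: "finite Good" unfolding Good_def using U by simp
  have c0: "card ?A \<le> card (Good \<union> {porbit g a, porbit g b})"
    using sub2 fin by (intro card_mono) auto
  have c1: "card (Good \<union> {porbit g a, porbit g b}) \<le> card Good + 2"
  proof -
    have "card {porbit g a, porbit g b} \<le> 2" by (simp add: card_insert_if)
    then show ?thesis using card_Un_le[of Good "{porbit g a, porbit g b}"] by linarith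
  qed
  have c2: "card Good \<le> card (porbit ?f ` U - {porbit ?f a})"
    using sub U by (intro card_mono) auto
  have c3: "card (porbit ?f ` U - {porbit ?f a}) = card (porbit ?f ` U) - 1"
    using U ab by (simp add: card_Diff_singleton)
  have c4: "card (porbit ?f ` U) \<ge> 1"
    using U ab by (metis One_nat_def Suc_leI card_gt_0_iff empty_iff finite_imageI imageI)
  show ?thesis using c0 c1 c2 c3 c4 by linarith
qed

lemma orbits_upper_step:
  assumes s: "permutation \<sigma>" and x: "\<sigma> x \<noteq> x"
  defines "U \<equiv> {z. \<sigma> z \<noteq> z}"
  shows "card (porbit \<sigma> ` U) + 1 \<le> card (porbit (Transposition.transpose x (\<sigma> x) \<circ> \<sigma>) ` U)"
proof -
  let ?y = "\<sigma> x"
  let ?f = "Transposition.transpose x ?y \<circ> \<sigma>"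
  let ?A = "porbit \<sigma> ` U"
  have inj: "inj \<sigma>" using permutation_bijective[OF s] by (simp add: bij_def)
  have U: "finite U" using s unfolding U_def by (simp add: permutation)
  have xU: "x \<in> U" using x U_def by simp
  have yU: "?y \<in> U" using x inj unfolding U_def by (simp add: inj_eq)
  define Good where "Good = ?A - {porbit \<sigma> x}"
  have fx: "?f x = x" by simp
  have pfx: "porbit ?f x = {x}" using porbit_fixed[of ?f x] fx by simp
  have yfy: "?y \<in> porbit ?f ?y" by simp
  have neq: "porbit ?f x \<noteq> porbit ?f ?y" by (metis pfx self_in_porbit singletonD x)
  have yx: "?y \<in> porbit \<sigma> x" using porbit_step[OF self_in_porbit] .
  have sub: "Good \<subseteq> porbit ?f ` U - {porbit ?f x, porbit ?f ?y}"
  proof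
    fix B assume B: "B \<in> Good"
    then obtain u where u: "u \<in> U" "B = porbit \<sigma> u" "B \<noteq> porbit \<sigma> x" unfolding Good_def by blast
    have nx: "x \<notin> B" using porbit_same[OF s] u by metis
    have ny: "?y \<notin> B" using porbit_same[OF s] u yx by metis
    have "\<forall>z\<in>porbit \<sigma> u. ?f z = \<sigma> z"
    proof
      fix z assume "z \<in> porbit \<sigma> u"
      then have "\<sigma> z \<in> B" using u porbit_step by metis
      then have "\<sigma> z \<noteq> x" "\<sigma> z \<noteq> ?y" using nx ny by auto
      then show "?f z = \<sigma> z" by (simp add: transpose_apply_other)
    qed
    then have "porbit ?f u = B" using porbit_agree u by metis
    moreover have "B \<noteq> porbit ?f x" using pfx nx by auto
    moreover have "B \<noteq> porbit ?f ?y" using yfy ny by auto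
    ultimately show "B \<in> porbit ?f ` U - {porbit ?f x, porbit ?f ?y}" using u by auto
  qed
  have fin: "finite (porbit ?f ` U)" using U by simp
  have c1: "card Good = card ?A - 1" unfolding Good_def using U xU by (simp add: card_Diff_singleton)
  have c2: "card Good \<le> card (porbit ?f ` U - {porbit ?f x, porbit ?f ?y})"
    using sub fin by (intro card_mono) auto
  have c3: "card (porbit ?f ` U - {porbit ?f x, porbit ?f ?y}) = card (porbit ?f ` U) - 2"
  proof -
    have "{porbit ?f x, porbit ?f ?y} \<subseteq> porbit ?f ` U" using xU yU by auto
    moreover have "card {porbit ?f x, porbit ?f ?y} = 2" using neq by simp
    ultimately show ?thesis using fin by (simp add: card_Diff_subset)
  qed
  have c4: "card ?A \<ge> 1" using U xU by (metis One_nat_def Suc_leI card_gt_0_iff empty_iff finite_imageI imageI)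
  have c5: "card (porbit ?f ` U) \<ge> 2"
  proof -
    have "{porbit ?f x, porbit ?f ?y} \<subseteq> porbit ?f ` U" using xU yU by auto
    then have "card {porbit ?f x, porbit ?f ?y} \<le> card (porbit ?f ` U)" using fin by (rule card_mono[rotated])
    then show ?thesis using neq by simp
  qed
  show ?thesis using c1 c2 c3 c4 c5 by linarith
qed

lemma supp_upper_step:
  assumes s: "permutation \<sigma>" and x: "\<sigma> x \<noteq> x"
  shows "{z. (Transposition.transpose x (\<sigma> x) \<circ> \<sigma>) z \<noteq> z} \<subseteq> {z. \<sigma> z \<noteq> z} - {x}"
proof
  fix z assume z: "z \<in> {z. (Transposition.transpose x (\<sigma> x) \<circ> \<sigma>) z \<noteq> z}"
  have inj: "inj \<sigma>" using permutation_bijective[OF s] by (simp add: bij_def)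
  have "z \<noteq> x" using z by auto
  moreover have "\<sigma> z \<noteq> z"
  proof
    assume a: "\<sigma> z = z"
    then have "z \<noteq> \<sigma> x" using x inj by (auto simp add: inj_eq)
    then show False using z a \<open>z \<noteq> x\<close> by (simp add: transpose_apply_other)
  qed
  ultimately show "z \<in> {z. \<sigma> z \<noteq> z} - {x}" by simp
qed

lemma lower_bound:
  assumes "\<forall>(a, b)\<in>set ts. a \<in> U \<and> b \<in> U" "finite U"
  shows "card U \<le> card (porbit (apply_transps ts) ` U) + length ts"
  using assms(1)
proof (induct ts)
  case Nil
  have e: "porbit (apply_transps []) ` U = (\<lambda>x. {x}) ` U" using porbit_fixed[of id] by auto
  have "card ((\<lambda>x. {x}) ` U) = card U" by (rule card_image) (auto simp: inj_on_def)
  then show ?case using e by (metis add_0_right le_refl list.size(3))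
next
  case (Cons p ts)
  obtain a b where p: "p = (a, b)" by (cases p)
  let ?g = "apply_transps ts"
  have perm: "?g permutes U" using Cons.prems by (intro permutes_apply_transps) auto
  have sg: "{z. ?g z \<noteq> z} \<subseteq> U" using perm permutes_not_in by fastforce
  have ab: "a \<in> U" "b \<in> U" using Cons.prems p by auto
  have h1: "card (porbit ?g ` U) \<le> card (porbit (Transposition.transpose a b \<circ> ?g) ` U) + 1"
    using orbits_lower_step[OF permutation_apply_transps sg assms(2) ab] .
  have h2: "card U \<le> card (porbit ?g ` U) + length ts" using Cons by auto
  have eq: "apply_transps (p # ts) = Transposition.transpose a b \<circ> ?g" using p by simp
  have len: "length (p # ts) = length ts + 1" by simp
  show ?case unfolding eq len using h1 h2 by linarith
qed

lemma dd_le_length: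
  assumes "\<sigma> = apply_transps ts"
  shows "dd \<sigma> \<le> length ts"
proof -
  define U where "U = fst ` set ts \<union> snd ` set ts"
  have fin: "finite U" unfolding U_def by simp
  have pts: "\<forall>(a, b)\<in>set ts. a \<in> U \<and> b \<in> U" unfolding U_def by force
  have perm: "\<sigma> permutes U" using assms pts by (simp add: permutes_apply_transps)
  have sg: "{z. \<sigma> z \<noteq> z} \<subseteq> U" using perm permutes_not_in by fastforce
  have "dd \<sigma> = card U - card (porbit \<sigma> ` U)"
    using dd_eq[OF _ sg fin] assms by simp
  then show ?thesis using lower_bound[OF pts fin] assms by simp
qed

lemma upper_bound:
  "permutation \<sigma> \<Longrightarrow> \<exists>ts. (\<forall>(a, b)\<in>set ts. a \<noteq> b) \<and> \<sigma> = apply_transps ts \<and> length ts \<le> dd \<sigma>"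
proof (induct "card {z. \<sigma> z \<noteq> z}" arbitrary: \<sigma> rule: less_induct)
  case less
  show ?case
  proof (cases "{z. \<sigma> z \<noteq> z} = {}")
    case True
    then have "\<sigma> = id" by auto
    then show ?thesis by (intro exI[of _ "[]"]) simp
  next
    case False
    then obtain x where x: "\<sigma> x \<noteq> x" by auto
    let ?t = "Transposition.transpose x (\<sigma> x)"
    let ?f = "?t \<circ> \<sigma>"
    define U where "U = {z. \<sigma> z \<noteq> z}"
    have U: "finite U" using less.prems unfolding U_def by (simp add: permutation)
    have pf: "permutation ?f" using less.prems by (simp add: permutation_compose permutation_swap_id)
    have sf: "{z. ?f z \<noteq> z} \<subseteq> U - {x}" using supp_upper_step[OF less.prems x] U_def by simp
    have "card {z. ?f z \<noteq> z} < card U"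
    proof -
      have "card {z. ?f z \<noteq> z} \<le> card (U - {x})" using sf U by (intro card_mono) auto
      moreover have "card (U - {x}) < card U" using U x unfolding U_def by (intro card_Diff1_less) auto
      ultimately show ?thesis by simp
    qed
    then obtain ts where ts: "\<forall>(a, b)\<in>set ts. a \<noteq> b" "?f = apply_transps ts" "length ts \<le> dd ?f"
      using less.hyps[OF _ pf] U_def by blast
    have "\<sigma> = ?t \<circ> ?f" by (metis comp_assoc id_comp transpose_comp_involutory)
    then have eq: "\<sigma> = apply_transps ((x, \<sigma> x) # ts)" using ts by simp
    have sfU: "{z. ?f z \<noteq> z} \<subseteq> U" using sf by auto
    have d1: "dd ?f = card U - card (porbit ?f ` U)" using dd_eq[OF pf sfU U] .
    have d2: "dd \<sigma> = card U - card (porbit \<sigma> ` U)" using dd_eq[OF less.prems _ U] U_def by simp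
    have st: "card (porbit \<sigma> ` U) + 1 \<le> card (porbit ?f ` U)" using orbits_upper_step[OF less.prems x] U_def by simp
    have "card (porbit ?f ` U) \<le> card U" using U by (simp add: card_image_le)
    then have "length ((x, \<sigma> x) # ts) \<le> dd \<sigma>" using d1 d2 st ts(3) by simp
    moreover have "\<forall>(a, b)\<in>set ((x, \<sigma> x) # ts). a \<noteq> b" using ts(1) x by auto
    ultimately show ?thesis using eq by blast
  qed
qed

lemma transp_length_dd:
  assumes "permutation \<sigma>"
  shows "transp_length \<sigma> = dd \<sigma>"
proof -
  let ?P = "\<lambda>k. \<exists>ts. length ts = k \<and> (\<forall>(a, b)\<in>set ts. a \<noteq> b) \<and>
      \<sigma> = foldr (\<lambda>(a, b) f. Transposition.transpose a b \<circ> f) ts id"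
  obtain ts where ts: "\<forall>(a, b)\<in>set ts. a \<noteq> b" "\<sigma> = apply_transps ts" "length ts \<le> dd \<sigma>"
    using upper_bound[OF assms] by blast
  have "?P (length ts)" using ts by (auto simp: foldr_transp)
  then have "(LEAST k. ?P k) \<le> length ts" by (rule Least_le)
  then have l1: "(LEAST k. ?P k) \<le> dd \<sigma>" using ts(3) by linarith
  have "?P (LEAST k. ?P k)" using \<open>?P (length ts)\<close> by (rule LeastI)
  then obtain ts' where ts': "length ts' = (LEAST k. ?P k)" "\<sigma> = apply_transps ts'"
    by (auto simp: foldr_transp)
  then have l2: "dd \<sigma> \<le> (LEAST k. ?P k)" using dd_le_length by metis
  show ?thesis unfolding transp_length_def using l1 l2 by simp
qed


section \<open>Conjugation invariance\<close>

lemma funpow_conj: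
  assumes "bij g"
  shows "(g \<circ> \<tau> \<circ> inv g) ^^ k = g \<circ> \<tau> ^^ k \<circ> inv g"
proof (induct k)
  case 0
  then show ?case using assms by (simp add: fun_eq_iff surj_f_inv_f bij_is_surj)
next
  case (Suc k)
  have ig: "inv g \<circ> g = id" using assms by (simp add: bij_is_inj)
  have "(g \<circ> \<tau> \<circ> inv g) ^^ Suc k = (g \<circ> \<tau> \<circ> inv g) \<circ> (g \<circ> \<tau> ^^ k \<circ> inv g)"
    by (simp only: funpow.simps(2) Suc)
  also have "\<dots> = g \<circ> \<tau> \<circ> (inv g \<circ> g) \<circ> \<tau> ^^ k \<circ> inv g" by (simp add: o_assoc)
  also have "\<dots> = g \<circ> \<tau> ^^ Suc k \<circ> inv g" using ig by (simp add: o_assoc funpow_Suc_right)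
  finally show ?case .
qed

lemma porbit_conj:
  assumes "bij g"
  shows "porbit (g \<circ> \<tau> \<circ> inv g) (g x) = g ` porbit \<tau> x"
proof -
  have "((g \<circ> \<tau> \<circ> inv g) ^^ k) (g x) = g ((\<tau> ^^ k) x)" for k
    using funpow_conj[OF assms, where \<tau>=\<tau> and k=k] assms by (simp add: bij_is_inj)
  then show ?thesis unfolding porbit_def by (auto simp: image_image)
qed

lemma supp_conj:
  assumes "bij g"
  shows "{z. (g \<circ> \<tau> \<circ> inv g) z \<noteq> z} = g ` {z. \<tau> z \<noteq> z}"
proof -
  have e: "(g \<circ> \<tau> \<circ> inv g) (g x) \<noteq> g x \<longleftrightarrow> \<tau> x \<noteq> x" for x
    using assms by (simp add: bij_is_inj inj_eq)
  have s: "g (inv g y) = y" for y using assms by (simp add: bij_is_surj surj_f_inv_f)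
  show ?thesis
  proof
    show "{z. (g \<circ> \<tau> \<circ> inv g) z \<noteq> z} \<subseteq> g ` {z. \<tau> z \<noteq> z}"
    proof
      fix y assume "y \<in> {z. (g \<circ> \<tau> \<circ> inv g) z \<noteq> z}"
      then have "(g \<circ> \<tau> \<circ> inv g) (g (inv g y)) \<noteq> g (inv g y)" using s by simp
      then have "\<tau> (inv g y) \<noteq> inv g y" using e by blast
      then show "y \<in> g ` {z. \<tau> z \<noteq> z}" using s by (metis (mono_tags, lifting) image_eqI mem_Collect_eq)
    qed
    show "g ` {z. \<tau> z \<noteq> z} \<subseteq> {z. (g \<circ> \<tau> \<circ> inv g) z \<noteq> z}" using e by auto
  qed
qed

lemma cycle_lengths_conj:
  assumes "bij g"
  shows "cycle_lengths (g \<circ> \<tau> \<circ> inv g) = cycle_lengths \<tau>"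
proof -
  let ?X = "porbit \<tau> ` {z. \<tau> z \<noteq> z}"
  have inj: "inj g" using assms by (simp add: bij_is_inj)
  have "porbit (g \<circ> \<tau> \<circ> inv g) ` {z. (g \<circ> \<tau> \<circ> inv g) z \<noteq> z} = (\<lambda>B. g ` B) ` ?X"
    unfolding supp_conj[OF assms] using porbit_conj[OF assms] by (auto simp: image_image)
  moreover have "inj_on (\<lambda>B. g ` B) ?X" using inj by (simp add: inj_on_def inj_image_eq_iff)
  ultimately have "mset_set (porbit (g \<circ> \<tau> \<circ> inv g) ` {z. (g \<circ> \<tau> \<circ> inv g) z \<noteq> z}) = image_mset (\<lambda>B. g ` B) (mset_set ?X)"
    by (simp add: image_mset_mset_set)
  moreover have cg: "card (g ` B) = card B" for B
    using inj by (metis card_image inj_on_subset subset_UNIV)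
  ultimately show ?thesis unfolding cycle_lengths_def
    by (simp add: image_mset.compositionality o_def cg)
qed

section \<open>Cycle type in S_n\<close>

definition ctype :: "nat \<Rightarrow> nat multiset \<Rightarrow> nat list" where
  "ctype n lm = rev (sorted_list_of_multiset (lm + replicate_mset (n - sum_mset lm) 1))"

lemma card_porbit_ge2:
  assumes "permutation \<tau>" "\<tau> x \<noteq> x"
  shows "card (porbit \<tau> x) \<ge> 2"
proof -
  have "{x, \<tau> x} \<subseteq> porbit \<tau> x" using porbit_step[OF self_in_porbit] by simp
  then have "card {x, \<tau> x} \<le> card (porbit \<tau> x)" using finite_porbit[OF assms(1)] by (rule card_mono[rotated])
  then show ?thesis using assms(2) by simp
qed

lemma cycle_lengths_ge2: "permutation \<tau> \<Longrightarrow> i \<in># cycle_lengths \<tau> \<Longrightarrow> i \<ge> 2"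
  unfolding cycle_lengths_def
  by (auto simp: permutation card_porbit_ge2)

lemma sum_cycle_lengths:
  assumes "permutation \<tau>"
  shows "sum_mset (cycle_lengths \<tau>) = card {z. \<tau> z \<noteq> z}"
proof -
  have "sum_mset (cycle_lengths \<tau>) = (\<Sum>B\<in>porbit \<tau> ` {z. \<tau> z \<noteq> z}. card B)"
    unfolding cycle_lengths_def by (simp add: sum_unfold_sum_mset)
  also have "\<dots> = card {z. \<tau> z \<noteq> z}"
    using assms by (intro card_porbits_sum) (auto simp: permutation)
  finally show ?thesis .
qed

lemma full_ctype_eq:
  assumes "\<tau> permutes {0..<n}"
  shows "full_ctype n \<tau> = ctype n (cycle_lengths \<tau>)"
proof -
  have p: "permutation \<tau>" using assms permutes_imp_permutation by blast
  let ?S = "{z. \<tau> z \<noteq> z}"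
  let ?F = "{0..<n} - ?S"
  have S: "?S \<subseteq> {0..<n}" using assms permutes_not_in by fastforce
  have un: "porbit \<tau> ` {0..<n} = porbit \<tau> ` ?S \<union> porbit \<tau> ` ?F" using S by auto
  have pf: "porbit \<tau> ` ?F = (\<lambda>x. {x}) ` ?F" using porbit_fixed by auto
  have finS: "finite ?S" using p by (simp add: permutation)
  have disj: "porbit \<tau> ` ?S \<inter> porbit \<tau> ` ?F = {}"
  proof (rule ccontr)
    assume "porbit \<tau> ` ?S \<inter> porbit \<tau> ` ?F \<noteq> {}"
    then obtain s f where sf: "s \<in> ?S" "f \<in> ?F" "porbit \<tau> s = porbit \<tau> f" by blast
    then have "porbit \<tau> s = {f}" using porbit_fixed by auto
    then have "s = f" using self_in_porbit[of s \<tau>] by auto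
    then show False using sf by auto
  qed
  have "image_mset card (mset_set (porbit \<tau> ` {0..<n})) =
      image_mset card (mset_set (porbit \<tau> ` ?S)) + image_mset card (mset_set ((\<lambda>x. {x}) ` ?F))"
    unfolding un using disj pf finS by (simp add: mset_set_Union)
  also have "image_mset card (mset_set ((\<lambda>x. {x}) ` ?F)) = replicate_mset (card ?F) 1"
  proof -
    have "image_mset card (mset_set ((\<lambda>x. {x}) ` ?F)) = image_mset (\<lambda>_. 1) (mset_set ((\<lambda>x. {x}) ` ?F))"
      by (rule image_mset_cong) auto
    also have "\<dots> = replicate_mset (card ((\<lambda>x. {x}) ` ?F)) 1" by (simp add: image_mset_const_eq)
    also have "card ((\<lambda>x. {x}) ` ?F) = card ?F" by (rule card_image) (auto simp: inj_on_def)
    finally show ?thesis .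
  qed
  also have "card ?F = n - sum_mset (cycle_lengths \<tau>)"
    using sum_cycle_lengths[OF p] S by (simp add: card_Diff_subset finite_subset)
  finally show ?thesis unfolding full_ctype_def ctype_def cycle_lengths_def by simp
qed

lemma conj_full_ctype:
  assumes "conj_to_Sn n \<sigma> \<tau>"
  shows "full_ctype n \<tau> = ctype n (cycle_lengths \<sigma>)"
proof -
  obtain g where g: "finitary g" "\<sigma> = g \<circ> \<tau> \<circ> inv g" and t: "\<tau> permutes {0..<n}"
    using assms unfolding conj_to_Sn_def by blast
  have "bij g" using g(1) by (simp add: finitary_def)
  then show ?thesis using g(2) t full_ctype_eq cycle_lengths_conj by simp
qed

definition Mc :: "nat list pmf \<Rightarrow> nat \<Rightarrow> nat multiset \<Rightarrow> real" where
  "Mc \<rho> n lm = (\<Sum>lam\<in>partitions n. pmf \<rho> lam * real_of_int (mn_char lam (ctype n lm))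
                               / real_of_int (dimY lam))"

lemma M_eq_Mc:
  assumes "\<exists>\<tau>. conj_to_Sn n \<sigma> \<tau>"
  shows "M \<rho> n \<sigma> = Mc \<rho> n (cycle_lengths \<sigma>)"
proof -
  have "conj_to_Sn n \<sigma> (SOME \<tau>. conj_to_Sn n \<sigma> \<tau>)" using assms by (rule someI_ex)
  then show ?thesis unfolding M_def Mc_def using assms conj_full_ctype by (simp add: Let_def)
qed

lemma conj_exists:
  assumes "finitary \<sigma>" "\<forall>z. \<sigma> z \<noteq> z \<longrightarrow> z < n"
  shows "conj_to_Sn n \<sigma> \<sigma>"
proof -
  have "\<sigma> permutes {0..<n}"
    unfolding permutes_def using assms by (auto simp: finitary_def bij_iff)
  moreover have "finitary id" by (simp add: finitary_def)
  ultimately show ?thesis unfolding conj_to_Sn_def by (intro conjI exI[of _ id]) auto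
qed

lemma M_eventually:
  assumes "finitary \<sigma>"
  shows "\<exists>N. \<forall>n\<ge>N. M \<rho> n \<sigma> = Mc \<rho> n (cycle_lengths \<sigma>)"
proof -
  have fin: "finite {z. \<sigma> z \<noteq> z}" using assms by (simp add: finitary_def)
  define N where "N = Suc (Max (insert 0 {z. \<sigma> z \<noteq> z}))"
  have "\<forall>z. \<sigma> z \<noteq> z \<longrightarrow> z < n" if "n \<ge> N" for n
    using that fin unfolding N_def by (metis (mono_tags, lifting) Max_ge finite_insert insertCI le_imp_less_Suc mem_Collect_eq order.strict_trans2)
  then show ?thesis using M_eq_Mc conj_exists[OF assms] by blast
qed


section \<open>Dimension is positive\<close>

lemma partitions_bound:
  assumes "l \<in> partitions m"
  shows "set l \<subseteq> {1..m}" "length l \<le> m"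
proof -
  have pos: "\<forall>x\<in>set l. 0 < x" and s: "sum_list l = m" using assms by (auto simp: partitions_def)
  show "set l \<subseteq> {1..m}"
  proof
    fix x assume "x \<in> set l"
    then show "x \<in> {1..m}" using pos s member_le_sum_list[of x l] by force
  qed
  have "length l \<le> sum_list l" using pos
  proof (induct l)
    case (Cons a l)
    then show ?case by auto
  qed simp
  then show "length l \<le> m" using s by simp
qed

lemma finite_partitions: "finite (partitions m)"
proof -
  have "partitions m \<subseteq> {l. set l \<subseteq> {1..m} \<and> length l \<le> m}" using partitions_bound by blast
  moreover have "finite {l. set l \<subseteq> {1..m} \<and> length l \<le> m}" by (rule finite_lists_length_le) simp
  ultimately show ?thesis by (rule finite_subset)
qed

lemma partitions_0: "partitions 0 = {[]}"
  unfolding partitions_def by (auto simp: sum_list_eq_0_iff) (metis less_irrefl neq_Nil_conv list.set_intros(1))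

lemma diagram_UN: "diagram l = (\<Union>i<length l. {i} \<times> {..<l ! i})"
  unfolding diagram_def by auto

lemma finite_diagram: "finite (diagram l)"
  unfolding diagram_UN by auto

lemma card_diagram: "card (diagram l) = sum_list l"
proof -
  have "card (diagram l) = (\<Sum>i<length l. card ({i} \<times> {..<l ! i}))"
    unfolding diagram_UN by (rule card_UN_disjoint) auto
  also have "\<dots> = (\<Sum>i<length l. l ! i)" by (simp add: card_cartesian_product)
  also have "\<dots> = sum_list l" by (simp add: sum_list_sum_nth atLeast0LessThan)
  finally show ?thesis .
qed

lemma diagram_snoc: "diagram (ys @ [v]) = diagram ys \<union> {(length ys, j) | j. j < v}"
  unfolding diagram_def by (auto simp: nth_append less_Suc_eq)

lemma exists_strip:
  assumes "lam \<in> partitions (Suc m)"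
  shows "\<exists>nu. nu \<in> partitions m \<and> border_strip lam nu"
proof -
  have lp: "sorted_wrt (\<ge>) lam" "\<forall>x\<in>set lam. 0 < x" "sum_list lam = Suc m"
    using assms by (auto simp: partitions_def)
  then have "lam \<noteq> []" by auto
  then obtain ys v where lam: "lam = ys @ [v]" by (metis rev_exhaust)
  have v: "v \<ge> 1" using lp lam by auto
  have ys: "sorted_wrt (\<ge>) ys" "\<forall>x\<in>set ys. v \<le> x" "\<forall>x\<in>set ys. 0 < x"
    using lp lam by (auto simp: sorted_wrt_append)
  define nu where "nu = (if v = 1 then ys else ys @ [v - 1])"
  have dnu: "diagram nu = diagram ys \<union> {(length ys, j) | j. j < v - 1}"
    unfolding nu_def using diagram_snoc by auto
  have "nu \<in> partitions m"
    unfolding partitions_def nu_def using ys lp lam v by (auto simp: sorted_wrt_append)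
  moreover have S: "diagram lam - diagram nu = {(length ys, v - 1)}"
    unfolding dnu lam diagram_snoc using v by (auto simp: diagram_def)
  moreover have "diagram nu \<subseteq> diagram lam"
    unfolding dnu lam diagram_snoc by auto
  moreover have "edge_connected {(length ys, v - 1)}"
    unfolding edge_connected_def by auto
  ultimately show ?thesis unfolding border_strip_def Let_def by (intro exI[of _ nu]) auto
qed

lemma strip_height_0:
  assumes "lam \<in> partitions (Suc m)" "nu \<in> partitions m" "border_strip lam nu"
  shows "strip_height lam nu = 0"
proof -
  have sub: "diagram nu \<subseteq> diagram lam" using assms(3) by (simp add: border_strip_def)
  have "card (diagram lam - diagram nu) = 1"
    using sub assms(1,2) by (simp add: card_Diff_subset finite_diagram card_diagram partitions_def)
  then obtain c where "diagram lam - diagram nu = {c}" by (rule card_1_singletonE)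
  then show ?thesis unfolding strip_height_def by simp
qed

lemma dimY_pos_aux: "lam \<in> partitions n \<Longrightarrow> mn_char lam (replicate n 1) \<ge> 1"
proof (induct n arbitrary: lam)
  case 0
  then show ?case by (simp add: partitions_0)
next
  case (Suc m)
  have sl: "sum_list lam = Suc m" using Suc.prems by (simp add: partitions_def)
  let ?T = "{nu. 1 \<le> sum_list lam \<and> nu \<in> partitions (sum_list lam - 1) \<and> border_strip lam nu}"
  have T: "?T = {nu. nu \<in> partitions m \<and> border_strip lam nu}" using sl by simp
  have finT: "finite ?T" unfolding T by (rule finite_subset[OF _ finite_partitions[of m]]) auto
  obtain nu0 where nu0: "nu0 \<in> ?T" using exists_strip[OF Suc.prems] T by auto
  have e1: "mn_char lam (replicate (Suc m) 1) = (\<Sum>nu\<in>?T. (-1) ^ strip_height lam nu * mn_char nu (replicate m 1))"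
    by simp
  have e2: "(\<Sum>nu\<in>?T. (-1) ^ strip_height lam nu * mn_char nu (replicate m 1)) = (\<Sum>nu\<in>?T. mn_char nu (replicate m 1))"
    using strip_height_0[OF Suc.prems] T by (intro sum.cong) auto
  have e3: "(\<Sum>nu\<in>?T. mn_char nu (replicate m 1)) \<ge> (\<Sum>nu\<in>?T. 1)"
    using Suc.hyps T by (intro sum_mono) auto
  have e4: "(\<Sum>nu\<in>?T. (1::int)) \<ge> 1"
  proof -
    have "card ?T \<ge> 1" using finT nu0 by (metis One_nat_def Suc_leI card_gt_0_iff empty_iff)
    then show ?thesis by simp
  qed
  show ?case using e1 e2 e3 e4 by linarith
qed

lemma dimY_pos:
  assumes "lam \<in> partitions n" shows "dimY lam \<ge> 1"
proof -
  have "sum_list lam = n" using assms by (simp add: partitions_def)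
  then show ?thesis unfolding dimY_def using dimY_pos_aux[OF assms] by simp
qed


lemma cycle_lengths_id: "cycle_lengths id = {#}"
  unfolding cycle_lengths_def by simp

lemma finitary_id: "finitary id" by (simp add: finitary_def)

lemma perm_of_type_spec:
  assumes "finitary \<sigma>" "\<forall>k\<ge>2. count (cycle_lengths \<sigma>) k = Poly_Mapping.lookup \<alpha> k"
  shows "finitary (perm_of_type \<alpha>) \<and> cycle_lengths (perm_of_type \<alpha>) = cycle_lengths \<sigma>"
proof -
  let ?P = "\<lambda>\<sigma>. finitary \<sigma> \<and> (\<forall>k\<ge>2. count (cycle_lengths \<sigma>) k = Poly_Mapping.lookup \<alpha> k)"
  have "?P (perm_of_type \<alpha>)" unfolding perm_of_type_def using assms by (intro someI[of ?P \<sigma>]) auto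
  then have f: "finitary (perm_of_type \<alpha>)" and c: "\<forall>k\<ge>2. count (cycle_lengths (perm_of_type \<alpha>)) k = Poly_Mapping.lookup \<alpha> k"
    by auto
  have "count (cycle_lengths (perm_of_type \<alpha>)) k = count (cycle_lengths \<sigma>) k" for k
  proof (cases "k \<ge> 2")
    case True then show ?thesis using c assms(2) by simp
  next
    case False
    then have "k \<notin># cycle_lengths (perm_of_type \<alpha>)" "k \<notin># cycle_lengths \<sigma>"
      using cycle_lengths_ge2 f assms(1) by (auto simp: finitary_iff_permutation)
    then show ?thesis by (simp add: not_in_iff)
  qed
  then show ?thesis using f by (simp add: multiset_eqI)
qed

lemma cycle_lengths_empty:
  assumes "finitary \<sigma>" "cycle_lengths \<sigma> = {#}"
  shows "\<sigma> = id"
proof -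
  have fin: "finite {z. \<sigma> z \<noteq> z}" using assms(1) by (simp add: finitary_def)
  have "mset_set (porbit \<sigma> ` {z. \<sigma> z \<noteq> z}) = {#}" using assms(2) unfolding cycle_lengths_def by simp
  then have "porbit \<sigma> ` {z. \<sigma> z \<noteq> z} = {}" using fin by (simp add: mset_set_empty_iff)
  then show ?thesis by auto
qed

lemma perm_of_type_0: "perm_of_type 0 = id"
proof -
  have "finitary (perm_of_type 0) \<and> cycle_lengths (perm_of_type 0) = cycle_lengths id"
    by (rule perm_of_type_spec) (auto simp: finitary_id cycle_lengths_id)
  then show ?thesis using cycle_lengths_empty cycle_lengths_id by metis
qed

lemma ctype_empty: "ctype n {#} = replicate n 1"
proof -
  have "replicate_mset n (1::nat) = mset (replicate n 1)" by simp
  moreover have "sort (replicate n (1::nat)) = replicate n 1"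
    by (rule sorted_sort_id) simp
  ultimately have "sorted_list_of_multiset (replicate_mset n (1::nat)) = replicate n 1"
    by (metis sorted_list_of_multiset_mset)
  then show ?thesis unfolding ctype_def by simp
qed

lemma Mc_empty:
  assumes "set_pmf \<rho> \<subseteq> partitions n"
  shows "Mc \<rho> n {#} = 1"
proof -
  have "Mc \<rho> n {#} = (\<Sum>lam\<in>partitions n. pmf \<rho> lam)"
    unfolding Mc_def ctype_empty
  proof (rule sum.cong)
    fix lam assume l: "lam \<in> partitions n"
    then have "sum_list lam = n" by (simp add: partitions_def)
    then have "mn_char lam (replicate n 1) = dimY lam" by (simp add: dimY_def)
    moreover have "dimY lam \<ge> 1" using dimY_pos[OF l] .
    ultimately show "pmf \<rho> lam * real_of_int (mn_char lam (replicate n 1)) / real_of_int (dimY lam) = pmf \<rho> lam"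
      by simp
  qed simp
  also have "\<dots> = 1" using assms finite_partitions by (simp add: sum_pmf_eq_1)
  finally show ?thesis .
qed

lemma M_id:
  assumes "set_pmf \<rho> \<subseteq> partitions n"
  shows "M \<rho> n id = 1"
proof -
  have "conj_to_Sn n id id" by (rule conj_exists) (auto simp: finitary_id)
  then have "M \<rho> n id = Mc \<rho> n (cycle_lengths id)" by (intro M_eq_Mc) blast
  then show ?thesis using Mc_empty[OF assms] cycle_lengths_id by simp
qed

lemma young_gf_0:
  assumes "set_pmf \<rho> \<subseteq> partitions n"
  shows "young_gf \<rho> n 0 = 1"
  unfolding young_gf_def using M_id[OF assms] by (simp add: perm_of_type_0)


section \<open>Formal power series algebra\<close>

type_synonym pm = "nat \<Rightarrow>\<^sub>0 nat"

definition deg :: "pm \<Rightarrow> nat" where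
  "deg \<alpha> = (\<Sum>k\<in>Poly_Mapping.keys \<alpha>. Poly_Mapping.lookup \<alpha> k)"

definition dec :: "pm \<Rightarrow> (pm \<times> pm) set" where
  "dec \<alpha> = {(\<beta>, \<gamma>). \<beta> + \<gamma> = \<alpha>}"

lemma deg_superset:
  assumes "finite K" "Poly_Mapping.keys \<alpha> \<subseteq> K"
  shows "deg \<alpha> = (\<Sum>k\<in>K. Poly_Mapping.lookup \<alpha> k)"
  unfolding deg_def using assms
  by (intro sum.mono_neutral_left) (auto simp: in_keys_iff)

lemma lookup_add_pm: "Poly_Mapping.lookup (\<beta> + \<gamma>) k = Poly_Mapping.lookup \<beta> k + Poly_Mapping.lookup \<gamma> k"
  by (simp add: lookup_add)

lemma keys_add_pm: "Poly_Mapping.keys ((\<beta>::pm) + \<gamma>) = Poly_Mapping.keys \<beta> \<union> Poly_Mapping.keys \<gamma>"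
  by (auto simp: in_keys_iff lookup_add)

lemma deg_add: "deg (\<beta> + \<gamma>) = deg \<beta> + deg \<gamma>"
proof -
  let ?K = "Poly_Mapping.keys \<beta> \<union> Poly_Mapping.keys \<gamma>"
  have "deg (\<beta> + \<gamma>) = (\<Sum>k\<in>?K. Poly_Mapping.lookup (\<beta> + \<gamma>) k)"
    by (rule deg_superset) (auto simp: keys_add_pm)
  also have "\<dots> = (\<Sum>k\<in>?K. Poly_Mapping.lookup \<beta> k) + (\<Sum>k\<in>?K. Poly_Mapping.lookup \<gamma> k)"
    by (simp add: lookup_add sum.distrib)
  also have "\<dots> = deg \<beta> + deg \<gamma>"
    by (simp add: deg_superset[symmetric])
  finally show ?thesis .
qed

lemma deg_0_iff: "deg \<alpha> = 0 \<longleftrightarrow> \<alpha> = 0"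
proof
  assume "deg \<alpha> = 0"
  then have "\<forall>k\<in>Poly_Mapping.keys \<alpha>. Poly_Mapping.lookup \<alpha> k = 0" unfolding deg_def by simp
  then have "\<forall>k. Poly_Mapping.lookup \<alpha> k = 0" by (metis in_keys_iff)
  then show "\<alpha> = 0" by (intro poly_mapping_eqI) simp
qed (simp add: deg_def)

lemma deg_zero[simp]: "deg 0 = 0" by (simp add: deg_0_iff)

lemma deg_single: "deg (Poly_Mapping.single k 1) = 1"
  by (simp add: deg_def)

lemma finite_below:
  "finite {\<beta>::pm. \<forall>k. Poly_Mapping.lookup \<beta> k \<le> Poly_Mapping.lookup \<alpha> k}"
proof -
  let ?K = "Poly_Mapping.keys \<alpha>"
  let ?S = "{\<beta>::pm. \<forall>k. Poly_Mapping.lookup \<beta> k \<le> Poly_Mapping.lookup \<alpha> k}"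
  let ?r = "\<lambda>\<beta>. restrict (Poly_Mapping.lookup \<beta>) ?K"
  have "?r ` ?S \<subseteq> PiE ?K (\<lambda>k. {0..Poly_Mapping.lookup \<alpha> k})" by auto
  moreover have "finite (PiE ?K (\<lambda>k. {0..Poly_Mapping.lookup \<alpha> k}))" by (intro finite_PiE) auto
  ultimately have fin: "finite (?r ` ?S)" by (rule finite_subset)
  have "inj_on ?r ?S"
  proof
    fix \<beta> \<gamma> assume b: "\<beta> \<in> ?S" and g: "\<gamma> \<in> ?S" and e: "?r \<beta> = ?r \<gamma>"
    show "\<beta> = \<gamma>"
    proof (rule poly_mapping_eqI)
      fix k
      show "Poly_Mapping.lookup \<beta> k = Poly_Mapping.lookup \<gamma> k"
      proof (cases "k \<in> ?K")
        case True
        then show ?thesis using fun_cong[OF e, of k] by simp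
      next
        case False
        then have "Poly_Mapping.lookup \<alpha> k = 0" by (simp add: in_keys_iff)
        then show ?thesis using b g by (metis le_zero_eq mem_Collect_eq)
      qed
    qed
  qed
  then show ?thesis by (rule finite_imageD[OF fin])
qed

lemma finite_dec: "finite (dec \<alpha>)"
proof -
  let ?S = "{\<beta>::pm. \<forall>k. Poly_Mapping.lookup \<beta> k \<le> Poly_Mapping.lookup \<alpha> k}"
  have "dec \<alpha> \<subseteq> (\<lambda>\<beta>. (\<beta>, \<alpha> - \<beta>)) ` ?S"
  proof
    fix p assume "p \<in> dec \<alpha>"
    then obtain \<beta> \<gamma> where p: "p = (\<beta>, \<gamma>)" "\<beta> + \<gamma> = \<alpha>" unfolding dec_def by auto
    then have "\<gamma> = \<alpha> - \<beta>" by (metis add_diff_cancel_left')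
    moreover have "\<beta> \<in> ?S" using p by (auto simp: lookup_add)
    ultimately show "p \<in> (\<lambda>\<beta>. (\<beta>, \<alpha> - \<beta>)) ` ?S" using p by auto
  qed
  then show ?thesis using finite_below by (rule finite_subset[OF _ finite_imageI])
qed

lemma mmult_dec: "mmult F G \<alpha> = (\<Sum>(\<beta>, \<gamma>)\<in>dec \<alpha>. F \<beta> * G \<gamma>)"
  unfolding mmult_def dec_def by simp

lemma dec_deg: "(\<beta>, \<gamma>) \<in> dec \<alpha> \<Longrightarrow> deg \<beta> \<le> deg \<alpha> \<and> deg \<gamma> \<le> deg \<alpha>"
  unfolding dec_def using deg_add by force

lemma mmult_comm: "mmult F G \<alpha> = mmult G F \<alpha>"
  unfolding mmult_dec
  by (rule sum.reindex_bij_witness[where i="\<lambda>(a, b). (b, a)" and j="\<lambda>(a, b). (b, a)"])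
     (auto simp: dec_def add.commute)

definition one :: mfps where "one = (\<lambda>\<alpha>. if \<alpha> = 0 then 1 else 0)"

lemma mpow_0: "mpow F 0 = one" by (simp add: one_def)

lemma mmult_one_right: "mmult F one \<alpha> = F \<alpha>"
proof -
  have "mmult F one \<alpha> = (\<Sum>p\<in>dec \<alpha>. if p = (\<alpha>, 0) then F \<alpha> else 0)"
    unfolding mmult_dec one_def by (rule sum.cong) (auto simp: dec_def split: if_splits)
  also have "\<dots> = F \<alpha>" using finite_dec by (simp add: dec_def)
  finally show ?thesis .
qed

lemma mmult_one_left: "mmult one F \<alpha> = F \<alpha>"
  using mmult_comm mmult_one_right by metis

lemma mmult_assoc: "mmult (mmult F G) H \<alpha> = mmult F (mmult G H) \<alpha>"
proof -
  let ?T = "{(a, b, c). a + b + c = \<alpha>} :: (pm \<times> pm \<times> pm) set"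
  have "mmult (mmult F G) H \<alpha> = (\<Sum>(d, c)\<in>dec \<alpha>. \<Sum>(a, b)\<in>dec d. F a * G b * H c)"
    unfolding mmult_dec by (simp add: sum_distrib_right case_prod_unfold)
  also have "\<dots> = (\<Sum>(p, q)\<in>Sigma (dec \<alpha>) (\<lambda>p. dec (fst p)). F (fst q) * G (snd q) * H (snd p))"
    by (subst sum.Sigma[symmetric]) (auto simp: finite_dec case_prod_unfold)
  also have "\<dots> = (\<Sum>(a, b, c)\<in>?T. F a * G b * H c)"
    by (rule sum.reindex_bij_witness[where i="\<lambda>(a, b, c). ((a + b, c), (a, b))" and j="\<lambda>((d, c), (a, b)). (a, b, c)"])
       (auto simp: dec_def)
  also have "\<dots> = (\<Sum>(p, q)\<in>Sigma (dec \<alpha>) (\<lambda>p. dec (snd p)). F (fst p) * G (fst q) * H (snd q))"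
    by (rule sum.reindex_bij_witness[where i="\<lambda>((a, e), (b, c)). (a, b, c)" and j="\<lambda>(a, b, c). ((a, b + c), (b, c))"])
       (auto simp: dec_def add.assoc)
  also have "\<dots> = (\<Sum>(a, e)\<in>dec \<alpha>. \<Sum>(b, c)\<in>dec e. F a * G b * H c)"
    by (subst sum.Sigma[symmetric]) (auto simp: finite_dec case_prod_unfold)
  also have "\<dots> = mmult F (mmult G H) \<alpha>"
    unfolding mmult_dec by (simp add: sum_distrib_left case_prod_unfold mult.assoc)
  finally show ?thesis .
qed


definition Eu :: "mfps \<Rightarrow> mfps" where "Eu F = (\<lambda>\<alpha>. real (deg \<alpha>) * F \<alpha>)"

lemma mmult_add_left: "mmult (\<lambda>\<beta>. P \<beta> + Q \<beta>) R \<alpha> = mmult P R \<alpha> + mmult Q R \<alpha>"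
  unfolding mmult_dec by (simp add: case_prod_unfold distrib_right sum.distrib)

lemma mmult_scale_right: "mmult F (\<lambda>\<beta>. c * P \<beta>) \<alpha> = c * mmult F P \<alpha>"
  unfolding mmult_dec by (simp add: case_prod_unfold sum_distrib_left mult_ac)

lemma mmult_sum_right:
  "mmult F (\<lambda>\<gamma>. \<Sum>m\<in>S. G m \<gamma>) \<alpha> = (\<Sum>m\<in>S. mmult F (G m) \<alpha>)"
  unfolding mmult_dec by (simp add: case_prod_unfold sum_distrib_left sum.swap[of _ S])

lemma mmult_cong_right:
  assumes "\<And>\<gamma>. deg \<gamma> \<le> deg \<alpha> \<Longrightarrow> G \<gamma> = G' \<gamma>"
  shows "mmult F G \<alpha> = mmult F G' \<alpha>"
  unfolding mmult_dec using assms dec_deg by (intro sum.cong) auto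

lemma Eu_mmult: "Eu (mmult F G) \<alpha> = mmult (Eu F) G \<alpha> + mmult F (Eu G) \<alpha>"
proof -
  have "Eu (mmult F G) \<alpha> = (\<Sum>(\<beta>, \<gamma>)\<in>dec \<alpha>. real (deg \<alpha>) * (F \<beta> * G \<gamma>))"
    unfolding Eu_def mmult_dec by (simp add: sum_distrib_left case_prod_unfold)
  also have "\<dots> = (\<Sum>(\<beta>, \<gamma>)\<in>dec \<alpha>. real (deg \<beta>) * F \<beta> * G \<gamma> + F \<beta> * (real (deg \<gamma>) * G \<gamma>))"
    by (rule sum.cong) (auto simp: dec_def deg_add algebra_simps)
  also have "\<dots> = mmult (Eu F) G \<alpha> + mmult F (Eu G) \<alpha>"
    unfolding Eu_def mmult_dec by (simp add: case_prod_unfold sum.distrib)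
  finally show ?thesis .
qed

lemma mpow_vanish:
  assumes "G 0 = 0"
  shows "deg \<alpha> < j \<Longrightarrow> mpow G j \<alpha> = 0"
proof (induct j arbitrary: \<alpha>)
  case 0 then show ?case by simp
next
  case (Suc m)
  have "mpow G (Suc m) \<alpha> = (\<Sum>(\<beta>, \<gamma>)\<in>dec \<alpha>. G \<beta> * mpow G m \<gamma>)" by (simp add: mmult_dec)
  also have "\<dots> = 0"
  proof (rule sum.neutral, safe)
    fix \<beta> \<gamma> assume d: "(\<beta>, \<gamma>) \<in> dec \<alpha>"
    show "G \<beta> * mpow G m \<gamma> = 0"
    proof (cases "\<beta> = 0")
      case True then show ?thesis using assms by simp
    next
      case False
      then have "deg \<beta> \<ge> 1" using deg_0_iff by (metis less_one not_le)
      then have "deg \<gamma> < m" using d Suc.prems by (auto simp: dec_def deg_add)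
      then show ?thesis using Suc.hyps by simp
    qed
  qed
  finally show ?case .
qed

lemma Eu_mpow: "Eu (mpow G (Suc m)) = (\<lambda>\<alpha>. real (Suc m) * mmult (mpow G m) (Eu G) \<alpha>)"
proof (induct m)
  case 0
  show ?case
  proof
    fix \<alpha>
    have "Eu (mpow G (Suc 0)) \<alpha> = Eu G \<alpha>" unfolding Eu_def by (simp add: mmult_one_right flip: one_def)
    also have "\<dots> = mmult (mpow G 0) (Eu G) \<alpha>" by (simp add: mmult_one_left flip: one_def)
    finally show "Eu (mpow G (Suc 0)) \<alpha> = real (Suc 0) * mmult (mpow G 0) (Eu G) \<alpha>" by simp
  qed
next
  case (Suc m)
  show ?case
  proof
    fix \<alpha>
    have "Eu (mpow G (Suc (Suc m))) \<alpha> = mmult (Eu G) (mpow G (Suc m)) \<alpha> + mmult G (Eu (mpow G (Suc m))) \<alpha>"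
      by (simp add: Eu_mmult)
    also have "mmult (Eu G) (mpow G (Suc m)) \<alpha> = mmult (mpow G (Suc m)) (Eu G) \<alpha>" by (rule mmult_comm)
    also have "mmult G (Eu (mpow G (Suc m))) \<alpha> = real (Suc m) * mmult G (mmult (mpow G m) (Eu G)) \<alpha>"
      unfolding Suc by (rule mmult_scale_right)
    also have "mmult G (mmult (mpow G m) (Eu G)) \<alpha> = mmult (mpow G (Suc m)) (Eu G) \<alpha>"
      by (simp add: mmult_assoc)
    finally show "Eu (mpow G (Suc (Suc m))) \<alpha> = real (Suc (Suc m)) * mmult (mpow G (Suc m)) (Eu G) \<alpha>"
      by (simp add: algebra_simps)
  qed
qed

lemma telescope:
  "(\<Sum>m<N. (-1) ^ m * (X m + X (Suc m))) = X 0 - (-1) ^ N * (X N :: real)"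
  by (induct N) (auto simp: algebra_simps)

lemma log_identity:
  assumes F0: "F 0 = 1"
  shows "real (deg \<alpha>) * F \<alpha> = mmult F (Eu (mlog F)) \<alpha>"
proof -
  define G where "G = (\<lambda>\<beta>. if \<beta> = 0 then 0 else F \<beta> / F 0)"
  have G0: "G 0 = 0" by (simp add: G_def)
  define N where "N = Suc (deg \<alpha>)"
  define LN where "LN = (\<lambda>\<gamma>. \<Sum>m<N. (-1) ^ m / real (m + 1) * mpow G (m + 1) \<gamma>)"
  have c1: "Eu (mlog F) \<gamma> = Eu LN \<gamma>" if "deg \<gamma> \<le> deg \<alpha>" for \<gamma>
  proof (cases "\<gamma> = 0")
    case True then show ?thesis by (simp add: Eu_def)
  next
    case False
    have "mlog F \<gamma> = suminf (\<lambda>m. (-1) ^ m / real (m + 1) * mpow G (m + 1) \<gamma>)"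
      using False unfolding mlog_def G_def Let_def by simp
    also have "\<dots> = LN \<gamma>" unfolding LN_def
    proof (rule suminf_finite)
      fix m assume "m \<notin> {..<N}"
      then have "deg \<gamma> < m + 1" using that N_def by simp
      then have "mpow G (m + 1) \<gamma> = 0" by (rule mpow_vanish[of G, OF G0])
      then show "(-1) ^ m / real (m + 1) * mpow G (m + 1) \<gamma> = 0" by simp
    qed simp
    finally show ?thesis by (simp add: Eu_def)
  qed
  have c3: "Eu LN = (\<lambda>\<gamma>. \<Sum>m<N. (-1) ^ m * mmult (mpow G m) (Eu G) \<gamma>)"
  proof
    fix \<gamma>
    have "Eu LN \<gamma> = (\<Sum>m<N. (-1) ^ m / real (m + 1) * Eu (mpow G (Suc m)) \<gamma>)"
      unfolding LN_def Eu_def by (simp add: sum_distrib_left mult_ac)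
    also have "\<dots> = (\<Sum>m<N. (-1) ^ m * mmult (mpow G m) (Eu G) \<gamma>)"
      unfolding Eu_mpow by (intro sum.cong) (auto simp: field_simps)
    finally show "Eu LN \<gamma> = (\<Sum>m<N. (-1) ^ m * mmult (mpow G m) (Eu G) \<gamma>)" .
  qed
  define X where "X = (\<lambda>m. mmult (mpow G m) (Eu G) \<alpha>)"
  have Fsplit: "F = (\<lambda>\<beta>. one \<beta> + G \<beta>)" using F0 by (auto simp: one_def G_def)
  have c5: "mmult F (mmult (mpow G m) (Eu G)) \<alpha> = X m + X (Suc m)" for m
  proof -
    have "mmult F (mmult (mpow G m) (Eu G)) \<alpha> = mmult one (mmult (mpow G m) (Eu G)) \<alpha> + mmult G (mmult (mpow G m) (Eu G)) \<alpha>"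
      by (subst Fsplit) (rule mmult_add_left)
    also have "\<dots> = X m + X (Suc m)" unfolding X_def by (simp add: mmult_one_left mmult_assoc)
    finally show ?thesis .
  qed
  have "mmult F (Eu (mlog F)) \<alpha> = mmult F (Eu LN) \<alpha>" using c1 by (rule mmult_cong_right)
  also have "\<dots> = (\<Sum>m<N. (-1) ^ m * mmult F (mmult (mpow G m) (Eu G)) \<alpha>)"
    unfolding c3 by (simp add: mmult_sum_right mmult_scale_right)
  also have "\<dots> = (\<Sum>m<N. (-1) ^ m * (X m + X (Suc m)))" using c5 by simp
  also have "\<dots> = X 0 - (-1) ^ N * X N" by (rule telescope)
  also have "X N = 0"
  proof -
    have "X N = (\<Sum>(\<beta>, \<gamma>)\<in>dec \<alpha>. mpow G N \<beta> * Eu G \<gamma>)" unfolding X_def mmult_dec ..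
    also have "\<dots> = 0"
    proof (rule sum.neutral, safe)
      fix \<beta> \<gamma> assume "(\<beta>, \<gamma>) \<in> dec \<alpha>"
      then have "deg \<beta> < N" using dec_deg N_def by fastforce
      then show "mpow G N \<beta> * Eu G \<gamma> = 0" using mpow_vanish[of G, OF G0] by simp
    qed
    finally show ?thesis .
  qed
  also have "X 0 = Eu G \<alpha>" unfolding X_def by (simp add: mmult_one_left flip: one_def)
  also have "Eu G \<alpha> = real (deg \<alpha>) * F \<alpha>" unfolding Eu_def G_def using F0 by simp
  finally show ?thesis by simp
qed


definition msum :: "nat list \<Rightarrow> pm" where
  "msum ks = sum_list (map (\<lambda>k. Poly_Mapping.single k 1) ks)"

lemma mderivs_coeff: "\<exists>C>0. \<forall>F. mderivs ks F \<beta> = C * F (\<beta> + msum ks)"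
proof (induct ks arbitrary: \<beta>)
  case Nil
  show ?case by (intro exI[of _ 1]) (simp add: mderivs_def msum_def)
next
  case (Cons k ks)
  obtain C where C: "C > 0" "\<forall>F. mderivs ks F \<beta> = C * F (\<beta> + msum ks)" using Cons by blast
  let ?C = "C * real (Poly_Mapping.lookup (\<beta> + msum ks) k + 1)"
  have "mderivs (k # ks) F \<beta> = ?C * F (\<beta> + msum (k # ks))" for F
  proof -
    have "mderivs (k # ks) F \<beta> = mderivs ks (mderiv k F) \<beta>" by (simp add: mderivs_def)
    also have "\<dots> = C * mderiv k F (\<beta> + msum ks)" using C by simp
    also have "\<dots> = ?C * F (\<beta> + msum (k # ks))"
      by (simp add: mderiv_def msum_def add_ac)
    finally show ?thesis .
  qed
  moreover have "?C > 0" using C by simp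
  ultimately show ?case by blast
qed

lemma deg_single'[simp]: "deg (Poly_Mapping.single k (Suc 0)) = Suc 0"
  using deg_single by simp

lemma lookup_minus_pm: "Poly_Mapping.lookup ((\<beta>::pm) - \<gamma>) k = Poly_Mapping.lookup \<beta> k - Poly_Mapping.lookup \<gamma> k"
  by (simp add: minus_poly_mapping.rep_eq)

lemma remove_single:
  assumes "k \<in> Poly_Mapping.keys (\<gamma>::pm)"
  shows "(\<gamma> - Poly_Mapping.single k 1) + Poly_Mapping.single k 1 = \<gamma>"
  using assms by (intro poly_mapping_eqI) (auto simp: lookup_add lookup_minus_pm lookup_single in_keys_iff when_def)

lemma exists_ks:
  "Poly_Mapping.lookup \<gamma> 0 = 0 \<Longrightarrow> \<exists>ks. msum ks = \<gamma> \<and> length ks = deg \<gamma> \<and> (\<forall>k\<in>set ks. 1 \<le> k)"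
proof (induct "deg \<gamma>" arbitrary: \<gamma>)
  case 0
  then have "\<gamma> = 0" using deg_0_iff by simp
  then show ?case by (intro exI[of _ "[]"]) (simp add: msum_def)
next
  case (Suc n)
  then have "\<gamma> \<noteq> 0" by auto
  then obtain k where k: "k \<in> Poly_Mapping.keys \<gamma>" by (metis all_not_in_conv keys_eq_empty)
  let ?g = "\<gamma> - Poly_Mapping.single k 1"
  have eq: "?g + Poly_Mapping.single k 1 = \<gamma>" using remove_single[OF k] .
  have "deg \<gamma> = deg ?g + deg (Poly_Mapping.single k 1)" by (metis eq deg_add)
  then have "deg ?g = n" using Suc.hyps(2) deg_single by simp
  moreover have "Poly_Mapping.lookup ?g 0 = 0" using Suc.prems by (simp add: lookup_minus_pm)
  ultimately obtain ks where ks: "msum ks = ?g" "length ks = n" "\<forall>k\<in>set ks. 1 \<le> k"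
    using Suc.hyps(1) by blast
  have "k \<noteq> 0" using k Suc.prems by (metis in_keys_iff)
  then show ?case using ks eq Suc.hyps(2)
    by (intro exI[of _ "k # ks"]) (auto simp: msum_def add.commute)
qed

lemma deg1_single:
  assumes "deg \<gamma> = 1"
  shows "\<exists>k. \<gamma> = Poly_Mapping.single k 1"
proof -
  have "\<exists>a\<in>Poly_Mapping.keys \<gamma>. Poly_Mapping.lookup \<gamma> a = 1 \<and>
    (\<forall>b\<in>Poly_Mapping.keys \<gamma>. b \<noteq> a \<longrightarrow> Poly_Mapping.lookup \<gamma> b = 0)"
    using assms unfolding deg_def by (subst (asm) sum_eq_1_iff) auto
  then obtain a where a: "a \<in> Poly_Mapping.keys \<gamma>" "Poly_Mapping.lookup \<gamma> a = 1"
    "\<forall>b\<in>Poly_Mapping.keys \<gamma>. b \<noteq> a \<longrightarrow> Poly_Mapping.lookup \<gamma> b = 0"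
    by blast
  have "\<gamma> = Poly_Mapping.single a 1"
  proof (rule poly_mapping_eqI)
    fix j show "Poly_Mapping.lookup \<gamma> j = Poly_Mapping.lookup (Poly_Mapping.single a 1) j"
      using a by (cases "j = a") (auto simp: lookup_single in_keys_iff when_def)
  qed
  then show ?thesis by blast
qed

definition Lam :: "(nat \<Rightarrow> real) \<Rightarrow> pm \<Rightarrow> real" where
  "Lam c \<gamma> = (\<Sum>k\<in>Poly_Mapping.keys \<gamma>. if \<gamma> = Poly_Mapping.single k 1 then c k else 0)"

lemma Lam_single: "Lam c (Poly_Mapping.single k 1) = c k"
  by (simp add: Lam_def)

lemma Lam_single'[simp]: "Lam c (Poly_Mapping.single k (Suc 0)) = c k"
  using Lam_single by simp

lemma Lam_deg: "deg \<gamma> \<noteq> 1 \<Longrightarrow> Lam c \<gamma> = 0"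
  unfolding Lam_def by (intro sum.neutral) (auto simp: deg_single)

lemma Lam_zero: "Lam c 0 = 0" by (simp add: Lam_def)

lemma L_limit:
  assumes LLN: "LLN_appropriate \<rho> c" and g: "\<gamma> \<noteq> 0" "Poly_Mapping.lookup \<gamma> 0 = 0"
  shows "(\<lambda>n. real (deg \<gamma>) * mlog (young_gf (\<rho> n) n) \<gamma>) \<longlonglongrightarrow> Lam c \<gamma>"
proof (cases "deg \<gamma> = 1")
  case True
  then obtain k where k: "\<gamma> = Poly_Mapping.single k 1" using deg1_single by blast
  then have "k \<noteq> 0" using g by (auto simp: lookup_single when_def split: if_splits)
  then have "(\<lambda>n. mderivs [k] (mlog (young_gf (\<rho> n) n)) 0) \<longlonglongrightarrow> c k"
    using LLN unfolding LLN_appropriate_def by simp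
  moreover have "mderivs [k] F 0 = F \<gamma>" for F by (simp add: mderivs_def mderiv_def k)
  ultimately show ?thesis using True k by (simp add: Lam_single)
next
  case False
  have "deg \<gamma> \<noteq> 0" using g deg_0_iff by simp
  then have d2: "deg \<gamma> \<ge> 2" using False by simp
  obtain ks where ks: "msum ks = \<gamma>" "length ks = deg \<gamma>" "\<forall>k\<in>set ks. 1 \<le> k" using exists_ks g(2) by blast
  obtain C where C: "C > 0" "\<forall>F. mderivs ks F 0 = C * F (0 + msum ks)" using mderivs_coeff by blast
  have "(\<lambda>n. mderivs ks (mlog (young_gf (\<rho> n) n)) 0) \<longlonglongrightarrow> 0"
    using LLN ks d2 unfolding LLN_appropriate_def by simp
  then have "(\<lambda>n. C * mlog (young_gf (\<rho> n) n) \<gamma>) \<longlonglongrightarrow> 0" using C ks by simp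
  then have "(\<lambda>n. (real (deg \<gamma>) / C) * (C * mlog (young_gf (\<rho> n) n) \<gamma>)) \<longlonglongrightarrow> (real (deg \<gamma>) / C) * 0"
    by (intro tendsto_mult tendsto_const)
  then show ?thesis using C Lam_deg[OF False] by simp
qed


definition Ef :: "(nat \<Rightarrow> real) \<Rightarrow> pm \<Rightarrow> real" where
  "Ef c \<beta> = (\<Prod>k\<in>Poly_Mapping.keys \<beta>. c k ^ Poly_Mapping.lookup \<beta> k / fact (Poly_Mapping.lookup \<beta> k))"

lemma Ef_superset:
  assumes "finite K" "Poly_Mapping.keys \<beta> \<subseteq> K"
  shows "Ef c \<beta> = (\<Prod>k\<in>K. c k ^ Poly_Mapping.lookup \<beta> k / fact (Poly_Mapping.lookup \<beta> k))"
  unfolding Ef_def using assms by (intro prod.mono_neutral_left) (auto simp: in_keys_iff)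

lemma Ef_step:
  assumes k: "k \<in> Poly_Mapping.keys \<beta>"
  shows "Ef c (\<beta> - Poly_Mapping.single k 1) * c k = real (Poly_Mapping.lookup \<beta> k) * Ef c \<beta>"
proof -
  let ?K = "Poly_Mapping.keys \<beta>"
  let ?b = "\<beta> - Poly_Mapping.single k 1"
  define f where "f = (\<lambda>j. c j ^ Poly_Mapping.lookup \<beta> j / fact (Poly_Mapping.lookup \<beta> j))"
  define g where "g = (\<lambda>j. c j ^ Poly_Mapping.lookup ?b j / fact (Poly_Mapping.lookup ?b j))"
  have lb: "Poly_Mapping.lookup ?b j = (if j = k then Poly_Mapping.lookup \<beta> k - 1 else Poly_Mapping.lookup \<beta> j)" for j
    by (simp add: lookup_minus_pm lookup_single when_def)
  have kb: "Poly_Mapping.keys ?b \<subseteq> ?K"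
  proof
    fix j assume "j \<in> Poly_Mapping.keys ?b"
    then have "Poly_Mapping.lookup ?b j \<noteq> 0" by (simp add: in_keys_iff)
    then show "j \<in> ?K" using lb[of j] k by (auto simp: in_keys_iff split: if_splits)
  qed
  have fin: "finite ?K" by simp
  have "Ef c ?b = prod g ?K" unfolding g_def by (rule Ef_superset[OF fin kb])
  also have "\<dots> = g k * prod g (?K - {k})" by (rule prod.remove[OF fin k])
  finally have e1: "Ef c ?b = g k * (\<Prod>j\<in>?K - {k}. g j)" .
  have "Ef c \<beta> = prod f ?K" unfolding f_def Ef_def ..
  also have "\<dots> = f k * prod f (?K - {k})" by (rule prod.remove[OF fin k])
  finally have e2: "Ef c \<beta> = f k * (\<Prod>j\<in>?K - {k}. f j)" .
  have e3: "(\<Prod>j\<in>?K - {k}. g j) = (\<Prod>j\<in>?K - {k}. f j)"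
    by (intro prod.cong) (auto simp: f_def g_def lb[simplified])
  obtain m where m: "Poly_Mapping.lookup \<beta> k = Suc m" using k by (metis in_keys_iff not0_implies_Suc)
  have e4: "g k * c k = real (Suc m) * f k"
  proof -
    have "g k * c k = c k ^ m * c k / fact m" unfolding g_def lb using m by simp
    moreover have "real (Suc m) * f k = real (Suc m) * (c k ^ m * c k) / (real (Suc m) * fact m)"
      unfolding f_def using m by (simp add: mult_ac)
    ultimately show ?thesis by simp
  qed
  have "Ef c ?b * c k = (g k * c k) * prod f (?K - {k})" using e1 e3 by (simp add: mult_ac)
  also have "\<dots> = real (Suc m) * f k * prod f (?K - {k})" using e4 by simp
  also have "\<dots> = real (Poly_Mapping.lookup \<beta> k) * Ef c \<beta>" using e2 m by (simp add: mult_ac)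
  finally show ?thesis .
qed

lemma single_inj: "Poly_Mapping.single k (1::nat) = Poly_Mapping.single j 1 \<Longrightarrow> k = j"
  by (metis lookup_single_eq lookup_single_not_eq zero_neq_one)

lemma comb_identity:
  "(\<Sum>p\<in>dec \<beta>. Ef c (fst p) * Lam c (snd p)) = real (deg \<beta>) * Ef c \<beta>"
proof -
  let ?h = "\<lambda>p. Ef c (fst p) * Lam c (snd p)"
  let ?i = "\<lambda>k. (\<beta> - Poly_Mapping.single k (1::nat), Poly_Mapping.single k (1::nat))"
  let ?K = "Poly_Mapping.keys \<beta>"
  have sub: "?i ` ?K \<subseteq> dec \<beta>" using remove_single by (auto simp: dec_def)
  have "(\<Sum>p\<in>dec \<beta>. ?h p) = (\<Sum>p\<in>?i ` ?K. ?h p)"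
  proof (rule sum.mono_neutral_right[OF finite_dec sub], rule ballI)
    fix p assume p: "p \<in> dec \<beta> - ?i ` ?K"
    obtain b g where bg: "p = (b, g)" "b + g = \<beta>" using p by (auto simp: dec_def)
    show "?h p = 0"
    proof (cases "deg g = 1")
      case True
      then obtain k where gk: "g = Poly_Mapping.single k 1" using deg1_single by blast
      have "Poly_Mapping.lookup \<beta> k = Poly_Mapping.lookup b k + Poly_Mapping.lookup g k"
        using bg(2) by (metis lookup_add)
      then have "Poly_Mapping.lookup \<beta> k \<ge> 1" using gk by simp
      then have kK: "k \<in> ?K" by (simp add: in_keys_iff)
      have "b = \<beta> - Poly_Mapping.single k 1" using bg gk by (metis add_diff_cancel_right')
      then have "p \<in> ?i ` ?K" using bg gk kK by auto
      then show ?thesis using p by blast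
    next
      case False
      then show ?thesis using bg Lam_deg by simp
    qed
  qed
  also have "\<dots> = (\<Sum>k\<in>?K. ?h (?i k))"
  proof -
    have inj: "inj_on ?i ?K"
    proof (rule inj_onI)
      fix x y assume "?i x = ?i y"
      then have "snd (?i x) = snd (?i y)" by (rule arg_cong)
      then have "Poly_Mapping.single x (1::nat) = Poly_Mapping.single y 1" by (simp only: snd_conv)
      then show "x = y" by (rule single_inj)
    qed
    show ?thesis using sum.reindex[OF inj, of ?h] by (simp add: o_def)
  qed
  also have "\<dots> = (\<Sum>k\<in>?K. real (Poly_Mapping.lookup \<beta> k) * Ef c \<beta>)"
    by (intro sum.cong) (auto simp: Lam_single Ef_step[simplified])
  also have "\<dots> = real (deg \<beta>) * Ef c \<beta>"
    unfolding deg_def by (simp add: sum_distrib_right)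
  finally show ?thesis .
qed

lemma F_limit:
  assumes P: "\<forall>n. set_pmf (\<rho> n) \<subseteq> partitions n" and LLN: "LLN_appropriate \<rho> c"
  shows "Poly_Mapping.lookup \<beta> 0 = 0 \<Longrightarrow> (\<lambda>n. young_gf (\<rho> n) n \<beta>) \<longlonglongrightarrow> Ef c \<beta>"
proof (induct "deg \<beta>" arbitrary: \<beta> rule: less_induct)
  case less
  let ?F = "\<lambda>n. young_gf (\<rho> n) n"
  let ?L = "\<lambda>n. mlog (young_gf (\<rho> n) n)"
  have F0: "?F n 0 = 1" for n using young_gf_0 P by blast
  show ?case
  proof (cases "\<beta> = 0")
    case True
    then show ?thesis using F0 by (simp add: Ef_def)
  next
    case False
    then have d0: "deg \<beta> \<noteq> 0" using deg_0_iff by simp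
    have ident: "real (deg \<beta>) * ?F n \<beta> = (\<Sum>p\<in>dec \<beta>. ?F n (fst p) * (real (deg (snd p)) * ?L n (snd p)))" for n
      using log_identity[of "?F n" \<beta>, OF F0] unfolding mmult_dec Eu_def by (simp add: case_prod_unfold)
    have termlim: "(\<lambda>n. ?F n (fst p) * (real (deg (snd p)) * ?L n (snd p))) \<longlonglongrightarrow> Ef c (fst p) * Lam c (snd p)"
      if p: "p \<in> dec \<beta>" for p
    proof -
      obtain b g where bg: "p = (b, g)" "b + g = \<beta>" using p by (auto simp: dec_def)
      have l0: "Poly_Mapping.lookup b 0 = 0" "Poly_Mapping.lookup g 0 = 0"
        using less.prems bg by (auto simp: lookup_add)
      show ?thesis
      proof (cases "g = 0")
        case True
        then show ?thesis using bg by (simp add: Lam_zero)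
      next
        case False
        then have "deg g \<noteq> 0" using deg_0_iff by simp
        moreover have "deg \<beta> = deg b + deg g" using bg(2) deg_add by metis
        ultimately have "deg b < deg \<beta>" by linarith
        then have "(\<lambda>n. ?F n b) \<longlonglongrightarrow> Ef c b" using less.hyps l0 by blast
        moreover have "(\<lambda>n. real (deg g) * ?L n g) \<longlonglongrightarrow> Lam c g" using L_limit[OF LLN False l0(2)] .
        ultimately show ?thesis using bg by (simp add: tendsto_mult)
      qed
    qed
    have "(\<lambda>n. \<Sum>p\<in>dec \<beta>. ?F n (fst p) * (real (deg (snd p)) * ?L n (snd p))) \<longlonglongrightarrow> (\<Sum>p\<in>dec \<beta>. Ef c (fst p) * Lam c (snd p))"
      using termlim by (rule tendsto_sum)
    then have "(\<lambda>n. real (deg \<beta>) * ?F n \<beta>) \<longlonglongrightarrow> real (deg \<beta>) * Ef c \<beta>"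
      unfolding comb_identity ident .
    then have lim2: "(\<lambda>n. (1 / real (deg \<beta>)) * (real (deg \<beta>) * ?F n \<beta>)) \<longlonglongrightarrow> (1 / real (deg \<beta>)) * (real (deg \<beta>) * Ef c \<beta>)"
      by (rule tendsto_mult[OF tendsto_const])
    have cancel: "(1 / real (deg \<beta>)) * (real (deg \<beta>) * x) = x" for x using d0 by simp
    show ?thesis using lim2 unfolding cancel .
  qed
qed


lemma power_sum_mset: "(x::real) ^ (\<Sum>i\<in>#A. g i) = (\<Prod>i\<in>#A. x ^ g i)"
  by (induct A) (simp_all add: power_add)

lemma M_eventually':
  assumes "finitary \<sigma>"
  shows "\<exists>N. \<forall>n\<ge>N. \<forall>\<rho>. M \<rho> n \<sigma> = Mc \<rho> n (cycle_lengths \<sigma>)"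
proof -
  have fin: "finite {z. \<sigma> z \<noteq> z}" using assms by (simp add: finitary_def)
  define N where "N = Suc (Max (insert 0 {z. \<sigma> z \<noteq> z}))"
  have "\<forall>z. \<sigma> z \<noteq> z \<longrightarrow> z < n" if "n \<ge> N" for n
  proof (intro allI impI)
    fix z assume "\<sigma> z \<noteq> z"
    then have "z \<le> Max (insert 0 {z. \<sigma> z \<noteq> z})" using fin by (intro Max_ge) auto
    then show "z < n" using that N_def by simp
  qed
  then show ?thesis using M_eq_Mc conj_exists[OF assms] by blast
qed

theorem mainTheorem12:
  fixes \<rho> :: "nat \<Rightarrow> nat list pmf" and c :: "nat \<Rightarrow> real"
    and \<sigma> :: "nat \<Rightarrow> nat" and lam :: "nat multiset"
  assumes "\<forall>n. set_pmf (\<rho> n) \<subseteq> partitions n"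
    and "LLN_appropriate \<rho> c"
    and "finitary \<sigma>"
    and "lam = cycle_lengths \<sigma>"
  shows "(\<lambda>n. sqrt (real n) ^ transp_length \<sigma> * M (\<rho> n) n \<sigma>) \<longlonglongrightarrow> (\<Prod>i\<in>#lam. c i)"
proof -
  note P = assms(1) and LLN = assms(2) and fs = assms(3) and lamd = assms(4)
  have ps: "permutation \<sigma>" using fs by (simp add: finitary_iff_permutation)
  have finc: "finite {k. count lam k \<noteq> 0}" by (simp add: count_eq_zero_iff)
  define \<alpha> :: pm where "\<alpha> = Abs_poly_mapping (count lam)"
  have la: "Poly_Mapping.lookup \<alpha> = count lam" unfolding \<alpha>_def using finc by simp
  have ka: "Poly_Mapping.keys \<alpha> = set_mset lam" by (auto simp: in_keys_iff la count_eq_zero_iff)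
  have l0: "Poly_Mapping.lookup \<alpha> 0 = 0"
    using cycle_lengths_ge2[OF ps] lamd la by (metis count_eq_zero_iff not_numeral_le_zero)
  define \<sigma>' where "\<sigma>' = perm_of_type \<alpha>"
  have s': "finitary \<sigma>'" "cycle_lengths \<sigma>' = lam"
    using perm_of_type_spec[OF fs, of \<alpha>] la lamd \<sigma>'_def by auto
  obtain N1 where N1: "\<forall>n\<ge>N1. M (\<rho> n) n \<sigma> = Mc (\<rho> n) n lam" using M_eventually'[OF fs] lamd by blast
  obtain N2 where N2: "\<forall>n\<ge>N2. M (\<rho> n) n \<sigma>' = Mc (\<rho> n) n lam" using M_eventually'[OF s'(1)] s'(2) by blast
  define PF where "PF = (\<Prod>k\<in>set_mset lam. fact (count lam k) :: real)"
  have PF0: "PF \<noteq> 0" unfolding PF_def by simp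
  have tl: "transp_length \<sigma> = (\<Sum>i\<in>#lam. i - 1)"
    using transp_length_dd[OF ps] dd_cycle_lengths lamd by simp
  have pw: "sqrt (real n) ^ transp_length \<sigma> = (\<Prod>k\<in>set_mset lam. sqrt (real n) ^ (count lam k * (k - 1)))" for n
  proof -
    have "sqrt (real n) ^ transp_length \<sigma> = (\<Prod>i\<in>#lam. sqrt (real n) ^ (i - 1))"
      unfolding tl by (rule power_sum_mset)
    also have "\<dots> = (\<Prod>k\<in>set_mset lam. (sqrt (real n) ^ (k - 1)) ^ count lam k)"
      by (rule image_prod_mset_multiplicity)
    also have "\<dots> = (\<Prod>k\<in>set_mset lam. sqrt (real n) ^ (count lam k * (k - 1)))"
      by (simp add: power_mult[symmetric] mult.commute)
    finally show ?thesis .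
  qed
  have eq: "sqrt (real n) ^ transp_length \<sigma> * M (\<rho> n) n \<sigma> = PF * young_gf (\<rho> n) n \<alpha>"
    if n: "n \<ge> max N1 N2" for n
  proof -
    have "M (\<rho> n) n \<sigma>' = M (\<rho> n) n \<sigma>" using N1 N2 n by simp
    then have "young_gf (\<rho> n) n \<alpha> = M (\<rho> n) n \<sigma> *
        (\<Prod>k\<in>set_mset lam. sqrt (real n) ^ (count lam k * (k - 1)) / fact (count lam k))"
      unfolding young_gf_def using l0 by (simp add: ka la \<sigma>'_def)
    also have "\<dots> = M (\<rho> n) n \<sigma> * (sqrt (real n) ^ transp_length \<sigma> / PF)"
      unfolding pw PF_def by (simp add: prod_dividef)
    finally show ?thesis using PF0 by (simp add: field_simps)
  qed
  have "(\<lambda>n. young_gf (\<rho> n) n \<alpha>) \<longlonglongrightarrow> Ef c \<alpha>" using F_limit[OF P LLN l0] .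
  then have lim: "(\<lambda>n. PF * young_gf (\<rho> n) n \<alpha>) \<longlonglongrightarrow> PF * Ef c \<alpha>"
    by (rule tendsto_mult[OF tendsto_const])
  have "PF * Ef c \<alpha> = (\<Prod>k\<in>set_mset lam. c k ^ count lam k)"
    unfolding PF_def Ef_def ka la by (simp add: prod.distrib[symmetric])
  also have "\<dots> = (\<Prod>i\<in>#lam. c i)" by (rule image_prod_mset_multiplicity[symmetric])
  finally have val: "PF * Ef c \<alpha> = (\<Prod>i\<in>#lam. c i)" .
  have ev: "\<forall>\<^sub>F n in sequentially. PF * young_gf (\<rho> n) n \<alpha> = sqrt (real n) ^ transp_length \<sigma> * M (\<rho> n) n \<sigma>"
    using eq unfolding eventually_sequentially by (intro exI[of _ "max N1 N2"]) auto
  show ?thesis using Lim_transform_eventually[OF lim ev] val by simp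
qed

end
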